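(* Let $n,p\in\mathbb{N}$, $0\le\lambda\le1$. Let $f$ be analytic in $\mathrm{U}=\{|z|<1\}$ of the form $f(z)=z^p+\sum_{k=p+n}^\infty a_kz^k$, put $\mathcal{F}_\lambda(z)=(1-\lambda)f(z)+\lambda zf'(z)$, and assume $\mathcal{F}_\lambda(z)\mathcal{F}_\lambda'(z)\neq0$ for all $z\in\mathrm{U}\setminus\{0\}$. Let $\delta\in[0,p)$ and $$\varsigma=\begin{cases} -\dfrac{n\delta}{2(p-\delta)}, & \delta\in[0,p/2],\\[2mm] -\dfrac{n(p-\delta)}{2\delta}, & \delta\in[p/2,p).\end{cases}$$ If $$\operatorname{Re}\left[-\frac{z\mathcal{F}_\lambda'(z)}{\mathcal{F}_\lambda(z)}+1+\frac{z\mathcal{F}_\lambda''(z)}{\mathcal{F}_\lambda'(z)}\right]>\varsigma,\quad z\in\mathrm{U},$$ then $\operatorname{Re}\dfrac{z\mathcal{F}_\lambda'(z)}{\mathcal{F}_\lambda(z)}>\delta$ for all $z\in\mathrm{U}$. *)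

theory Defs
  imports "HOL-Complex_Analysis.Complex_Analysis"
begin

definition Flam :: "real \<Rightarrow> (complex \<Rightarrow> complex) \<Rightarrow> complex \<Rightarrow> complex" where
  "Flam lam f z = (1 - of_real lam) * f z + of_real lam * z * deriv f z"

definition varsigma :: "nat \<Rightarrow> nat \<Rightarrow> real \<Rightarrow> real" where
  "varsigma n p \<delta> =
     (if \<delta> \<le> real p / 2 then - (real n * \<delta>) / (2 * (real p - \<delta>))
      else - (real n * (real p - \<delta>)) / (2 * \<delta>))"

end

theory Submission
  imports Defs
begin


lemma real_deriv_Re_comp:
  assumes "(h has_field_derivative D) (at (of_real t))"
  shows "((\<lambda>x. Re (h (of_real x))) has_real_derivative Re D) (at t)"
  using has_field_derivative_Re[OF has_vector_derivative_real_field[OF assms]] by simp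

lemma final_ineq:
  fixes n p :: nat and \<delta> x y :: real
  assumes "n \<ge> 1" "0 \<le> \<delta>" "\<delta> < real p"
    and "x \<le> - real n * ((real p - \<delta>)^2 + y^2) / (2 * (real p - \<delta>))"
  shows "x * \<delta> / (\<delta>^2 + y^2) \<le> varsigma n p \<delta>"
proof -
  define d where "d = real p - \<delta>"
  have d: "d > 0" using assms d_def by simp
  have x: "x * (2*d) \<le> - real n * (d^2 + y^2)"
    using assms(4) d by (simp add: d_def field_simps)
  show ?thesis
  proof (cases "\<delta> = 0")
    case True then show ?thesis by (simp add: varsigma_def)
  next
    case False
    then have dp: "\<delta> > 0" using assms by simp
    have den: "\<delta>^2 + y^2 > 0" using dp by (simp add: add_pos_nonneg)
    have key: "x * \<delta> * (2*d) \<le> - real n * \<delta> * (d^2 + y^2)"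
      using mult_right_mono[OF x, of \<delta>] dp by (simp add: algebra_simps)
    show ?thesis
    proof (cases "\<delta> \<le> real p / 2")
      case True
      then have "d \<ge> \<delta>" by (simp add: d_def)
      then have "\<delta>^2 \<le> d^2" using dp by (simp add: power_mono)
      have "x * \<delta> * (2*d) \<le> - real n * \<delta> * (\<delta>^2 + y^2)"
      proof -
        have "real n * \<delta> * (\<delta>^2 + y^2) \<le> real n * \<delta> * (d^2 + y^2)"
          using \<open>\<delta>^2 \<le> d^2\<close> dp by (intro mult_left_mono) auto
        then show ?thesis using key by linarith
      qed
      then have "x * \<delta> / (\<delta>^2 + y^2) \<le> - (real n * \<delta>) / (2 * d)"
        using den d by (simp add: field_simps)
      then show ?thesis using True by (simp add: varsigma_def d_def)
    next
      case False
      then have "d < \<delta>" by (simp add: d_def)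
      have "x * \<delta> * (2*d) * \<delta> \<le> - real n * \<delta> * (d^2 + y^2) * \<delta>"
        using mult_right_mono[OF key, of \<delta>] dp by simp
      also have "\<dots> \<le> - real n * d * (\<delta>^2 + y^2) * d"
      proof -
        have "\<delta>^2 * (d^2 + y^2) \<ge> d^2 * (\<delta>^2 + y^2)"
          using \<open>d < \<delta>\<close> d by (simp add: algebra_simps power_strict_mono less_imp_le mult_right_mono power_mono)
        then have "real n * (\<delta>^2 * (d^2 + y^2)) \<ge> real n * (d^2 * (\<delta>^2 + y^2))"
          by (simp add: mult_left_mono)
        then show ?thesis by (simp add: power2_eq_square algebra_simps)
      qed
      finally have "d * (x * \<delta> * (2*\<delta>)) \<le> d * (- real n * d * (\<delta>^2 + y^2))"
        by (simp add: algebra_simps)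
      then have "x * \<delta> * (2*\<delta>) \<le> - real n * d * (\<delta>^2 + y^2)"
        using d by (simp only: mult_le_cancel_left_pos)
      then have "x * \<delta> / (\<delta>^2 + y^2) \<le> - (real n * d) / (2 * \<delta>)"
        using den d dp by (simp add: field_simps)
      then show ?thesis using False by (simp add: varsigma_def d_def)
    qed
  qed
qed

lemma mult_helper:
  fixes D q' z0 k :: complex
  assumes "D \<noteq> 0"
  shows "- D / cnj D * (q' * k / D^2 * z0) = - (z0 * q' * k) / (D * cnj D)"
proof -
  have "cnj D \<noteq> 0" using assms by simp
  then show ?thesis using assms by (simp add: field_simps power2_eq_square)
qed

lemma core:
  fixes q R :: "complex \<Rightarrow> complex" and n p :: nat and \<delta> :: real
  assumes n1: "n \<ge> 1" and d0: "0 \<le> \<delta>" and dp: "\<delta> < real p"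
    and holq: "q holomorphic_on ball 0 1" and holR: "R holomorphic_on ball 0 1"
    and rep: "\<forall>z\<in>ball 0 1. q z = of_nat p + z^n * R z"
    and hyp: "\<forall>z\<in>ball 0 1 - {0}. Re (z * deriv q z / q z) > varsigma n p \<delta>"
  shows "\<forall>z\<in>ball 0 1. Re (q z) > \<delta>"
proof (rule ccontr)
  assume "\<not> ?thesis"
  then obtain z1 where z1: "z1 \<in> ball 0 1" "Re (q z1) \<le> \<delta>" by (auto simp: not_less)
  define r1 where "r1 = norm z1"
  have r1: "r1 < 1" using z1 by (simp add: r1_def)
  have sub1: "cball 0 r1 \<subseteq> ball 0 1" using r1 by auto
  have contq: "continuous_on (ball 0 1) q" using holq holomorphic_on_imp_continuous_on by blast
  have contRe: "continuous_on (cball 0 r1) (\<lambda>z. Re (q z))"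
    by (intro continuous_intros continuous_on_subset[OF contq sub1])
  define T where "T = cball 0 r1 \<inter> (\<lambda>z. Re (q z)) -` {..\<delta>}"
  have "closed T" unfolding T_def by (rule continuous_closed_preimage[OF contRe]) auto
  moreover have "bounded T" unfolding T_def by (meson Int_lower1 bounded_cball bounded_subset)
  ultimately have "compact T" by (simp add: compact_eq_bounded_closed)
  moreover have "z1 \<in> T" using z1 by (simp add: T_def r1_def)
  ultimately obtain z0 where z0T: "z0 \<in> T" and z0min: "\<And>y. y \<in> T \<Longrightarrow> norm z0 \<le> norm y"
    using continuous_attains_inf[of T norm] continuous_on_norm_id by blast
  define r0 where "r0 = norm z0"
  have q0: "q 0 = of_nat p" using rep n1 by auto
  have z0b: "z0 \<in> ball 0 1" and Rez0le: "Re (q z0) \<le> \<delta>" using z0T sub1 r1 by (auto simp: T_def)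
  have "z0 \<noteq> 0" using Rez0le q0 dp by auto
  then have r0p: "r0 > 0" by (simp add: r0_def)
  have r0r1: "r0 \<le> r1" using z0T by (simp add: T_def r0_def)
  have subc: "cball 0 r0 \<subseteq> ball 0 1" using r0r1 r1 by auto
  have inner: "Re (q z) > \<delta>" if "norm z < r0" for z
  proof (rule ccontr)
    assume "\<not> Re (q z) > \<delta>"
    then have "z \<in> T" using that r0r1 by (simp add: T_def)
    then show False using z0min[of z] that by (simp add: r0_def)
  qed
  have ge: "\<forall>z\<in>cball 0 r0. Re (q z) \<ge> \<delta>"
  proof -
    have cR: "continuous_on (cball 0 r0) (\<lambda>z. Re (q z))"
      by (intro continuous_intros continuous_on_subset[OF contq subc])
    have cl: "closed (cball 0 r0 \<inter> (\<lambda>z. Re (q z)) -` {\<delta>..})"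
      by (rule continuous_closed_preimage[OF cR]) auto
    have "ball 0 r0 \<subseteq> cball 0 r0 \<inter> (\<lambda>z. Re (q z)) -` {\<delta>..}"
      using inner by (auto simp: less_imp_le)
    from closure_minimal[OF this cl] r0p show ?thesis by auto
  qed
  have Req0: "Re (q z0) = \<delta>" using ge Rez0le by (force simp: r0_def)
  define c :: complex where "c = of_real (real p - 2 * \<delta>)"
  define S where "S z = R z / (q z + c)" for z
  define \<omega> where "\<omega> z = (q z - of_nat p) / (q z + c)" for z
  have Dnz: "q z + c \<noteq> 0" if "z \<in> cball 0 r0" for z
  proof -
    have "Re (q z) \<ge> \<delta>" using ge that by blast
    then have pos: "Re (q z + c) > 0" using dp by (simp add: c_def)
    show ?thesis
    proof
      assume "q z + c = 0"
      then have "Re (q z + c) = 0" by simp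
      then show False using pos by simp
    qed
  qed
  have omS: "\<omega> z = z^n * S z" if "z \<in> ball 0 1" for z
    using rep that by (simp add: \<omega>_def S_def)
  have normle: "norm (q z - of_nat p) \<le> norm (q z + c)" if "Re (q z) \<ge> \<delta>" for z
  proof -
    have e: "(Re (q z) + (real p - 2*\<delta>))^2 - (Re (q z) - real p)^2 = 4 * ((Re (q z) - \<delta>) * (real p - \<delta>))"
      by (simp add: power2_eq_square algebra_simps)
    have "(Re (q z) - \<delta>) * (real p - \<delta>) \<ge> 0" using that dp by simp
    then have "(Re (q z) - real p)^2 \<le> (Re (q z) + (real p - 2*\<delta>))^2" using e by linarith
    then show ?thesis unfolding norm_complex_def c_def
      by (intro real_sqrt_le_mono) simp
  qed
  have normeq: "norm (q z0 - of_nat p) = norm (q z0 + c)"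
  proof -
    have "(Re (q z0) - real p)^2 = (Re (q z0) + (real p - 2*\<delta>))^2"
      using Req0 by (simp add: power2_eq_square algebra_simps)
    then show ?thesis unfolding norm_complex_def c_def by simp
  qed
  have omle: "norm (\<omega> z) \<le> 1" if "z \<in> cball 0 r0" for z
    using normle[of z] ge that Dnz[OF that] by (simp add: \<omega>_def norm_divide divide_le_eq_1)
  have om0: "norm (\<omega> z0) = 1"
    using normeq Dnz[of z0] by (simp add: \<omega>_def norm_divide r0_def)
  have Sle: "norm (S z) \<le> 1 / r0^n" if "z \<in> cball 0 r0" for z
  proof (rule maximum_modulus_frontier[of S "cball 0 r0"])
    show "S holomorphic_on interior (cball 0 r0)"
      unfolding S_def using Dnz r0r1 r1
      by (auto intro!: holomorphic_intros holomorphic_on_subset[OF holR] holomorphic_on_subset[OF holq] simp: subset_iff)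
    show "continuous_on (closure (cball 0 r0)) S"
      unfolding S_def using Dnz subc
      by (auto intro!: continuous_intros continuous_on_subset[OF contq subc]
          continuous_on_subset[OF holomorphic_on_imp_continuous_on[OF holR] subc])
  next
    fix w :: complex assume "w \<in> frontier (cball 0 r0)"
    then have w: "norm w = r0" "w \<in> cball 0 r0" by auto
    have "w \<in> ball 0 1" using w subc by blast
    then have "norm (\<omega> w) = r0^n * norm (S w)" using omS[of w] w by (simp add: norm_mult norm_power)
    then have "r0^n * norm (S w) \<le> 1" using omle[OF w(2)] by simp
    then show "norm (S w) \<le> 1 / r0^n" using r0p by (simp add: field_simps)
  qed (use that in auto)
  define q' where "q' = deriv q z0"
  have Dq: "(q has_field_derivative q') (at w)" if "w = z0" for w
    using holomorphic_derivI[OF holq open_ball z0b] that by (simp add: q'_def)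
  have tang: "Re (q' * (z0 * \<i>)) = 0"
  proof -
    have D1: "((\<lambda>w. q (z0 * exp (\<i> * w))) has_field_derivative q' * (z0 * (exp (\<i> * 0) * \<i>))) (at (of_real 0))"
      by (rule DERIV_chain2[OF Dq]) (auto intro!: derivative_eq_intros)
    have D2: "((\<lambda>t. Re (q (z0 * exp (\<i> * of_real t)))) has_real_derivative Re (q' * (z0 * \<i>))) (at 0)"
      using real_deriv_Re_comp[OF D1] by simp
    show ?thesis
    proof (rule DERIV_local_min[OF D2, of 1])
      show "\<forall>y. \<bar>0 - y\<bar> < 1 \<longrightarrow> Re (q (z0 * exp (\<i> * complex_of_real 0))) \<le> Re (q (z0 * exp (\<i> * complex_of_real y)))"
        using ge Req0 by (auto simp: norm_mult r0_def)
    qed simp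
  qed
  define \<omega>' where "\<omega>' = (q' * (q z0 + c) - (q z0 - of_nat p) * q') / (q z0 + c)^2"
  have Dom: "(\<omega> has_field_derivative \<omega>') (at w)" if "w = z0" for w
    unfolding \<omega>_def[abs_def] \<omega>'_def using that Dnz[of z0] Dq[of z0]
    by (auto intro!: derivative_eq_intros simp: r0_def power2_eq_square)
  define w0 where "w0 = cnj (\<omega> z0)"
  have rad: "Re (w0 * (\<omega>' * z0)) \<ge> real n"
  proof (rule ccontr)
    assume neg: "\<not> ?thesis"
    define \<phi> where "\<phi> t = Re (w0 * \<omega> (of_real t * z0)) - t^n" for t :: real
    have D1: "((\<lambda>x. w0 * \<omega> (x * z0)) has_field_derivative w0 * (\<omega>' * z0)) (at (of_real 1))"
      by (rule DERIV_cmult, rule DERIV_chain2[OF Dom]) (auto intro!: derivative_eq_intros)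
    have Dphi: "(\<phi> has_real_derivative Re (w0 * (\<omega>' * z0)) - real n * 1^(n-1)) (at 1)"
      unfolding \<phi>_def[abs_def]
      using DERIV_diff[OF real_deriv_Re_comp[OF D1] DERIV_pow[of n 1]] by simp
    have lneg: "Re (w0 * (\<omega>' * z0)) - real n * 1^(n-1) < 0" using neg by simp
    obtain e where e: "e > 0" "\<And>h. h > 0 \<Longrightarrow> h < e \<Longrightarrow> \<phi> 1 < \<phi> (1 - h)"
      using DERIV_neg_dec_left[OF Dphi lneg] by blast
    define h where "h = min (e/2) (1/2)"
    have h: "h > 0" "h < e" "h < 1" using e by (auto simp: h_def)
    have w1: "w0 * \<omega> z0 = 1"
    proof -
      have "\<omega> z0 * cnj (\<omega> z0) = of_real ((norm (\<omega> z0))^2)" by (rule complex_norm_square[symmetric])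
      then show ?thesis using om0 by (simp add: w0_def mult.commute)
    qed
    have "\<phi> 1 = 0" using w1 by (simp add: \<phi>_def)
    moreover have "\<phi> (1 - h) \<le> 0"
    proof -
      define t where "t = 1 - h"
      have t: "0 < t" "t < 1" using h by (auto simp: t_def)
      have "t * norm z0 \<le> 1 * norm z0" using t by (intro mult_right_mono) auto
      then have tz: "of_real t * z0 \<in> cball 0 r0" using t by (simp add: norm_mult r0_def)
      have "Re (w0 * \<omega> (of_real t * z0)) \<le> norm (w0 * \<omega> (of_real t * z0))" by (rule complex_Re_le_cmod)
      also have "\<dots> = norm (\<omega> (of_real t * z0))" using om0 by (simp add: w0_def norm_mult)
      also have "\<dots> = t^n * r0^n * norm (S (of_real t * z0))"
      proof -
        have "of_real t * z0 \<in> ball 0 1" using tz subc by blast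
        then have "\<omega> (of_real t * z0) = (of_real t * z0)^n * S (of_real t * z0)" by (rule omS)
        then show ?thesis using t by (simp add: norm_mult norm_power r0_def power_mult_distrib)
      qed
      also have "\<dots> \<le> t^n * r0^n * (1 / r0^n)"
        using Sle[OF tz] t r0p by (intro mult_left_mono) auto
      also have "\<dots> = t^n" using r0p by simp
      finally show ?thesis by (simp add: \<phi>_def t_def)
    qed
    ultimately show False using e(2)[OF h(1,2)] by simp
  qed
  define d where "d = real p - \<delta>"
  define y where "y = Im (q z0)"
  define X where "X = z0 * q'"
  have ImX: "Im X = 0" using tang by (simp add: X_def algebra_simps)
  then have Xr: "X = of_real (Re X)" by (simp add: complex_eq_iff)
  have qz0: "q z0 = Complex \<delta> y" using Req0 by (simp add: y_def complex_eq_iff)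
  have Dc: "q z0 + c = Complex d y" by (simp add: qz0 c_def d_def complex_eq_iff)
  have Nc: "cnj (q z0 - of_nat p) = - Complex d y" by (simp add: qz0 d_def complex_eq_iff)
  have dpos: "d > 0" using dp by (simp add: d_def)
  have Dnz0: "Complex d y \<noteq> 0" using dpos by (simp add: complex_eq_iff)
  define x where "x = Re X"
  have Xx: "X = of_real x" using Xr by (simp add: x_def)
  have "w0 = cnj (q z0 - of_nat p) / cnj (q z0 + c)"
    unfolding w0_def \<omega>_def by (rule complex_cnj_divide)
  then have w0e: "w0 = - Complex d y / cnj (Complex d y)" by (simp only: Nc Dc)
  have e1: "q' * (q z0 + c) - (q z0 - of_nat p) * q' = q' * (2 * of_real d)"
    by (simp add: c_def d_def algebra_simps)
  have "\<omega>' = q' * (2 * of_real d) / (q z0 + c)^2"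
    unfolding \<omega>'_def e1 by (rule refl)
  then have w'e: "\<omega>' = q' * (2 * of_real d) / (Complex d y)^2" by (simp only: Dc)
  have "w0 * (\<omega>' * z0) = - (X * (2 * of_real d)) / (Complex d y * cnj (Complex d y))"
    unfolding w0e w'e X_def using mult_helper[OF Dnz0] .
  also have "\<dots> = of_real (- (x * 2 * d / (d^2 + y^2)))"
    unfolding Xx complex_mult_cnj by simp
  finally have "Re (w0 * (\<omega>' * z0)) = - (x * 2 * d / (d^2 + y^2))" by (simp only: Re_complex_of_real)
  with rad have nle: "real n \<le> - (x * 2 * d / (d^2 + y^2))" by simp
  have den: "d^2 + y^2 > 0" using dpos by (simp add: add_pos_nonneg)
  have xle: "x \<le> - real n * (d^2 + y^2) / (2 * d)"
    using nle den dpos by (simp add: field_simps)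
  have "Re (z0 * deriv q z0 / q z0) = Re (of_real x / Complex \<delta> y)"
    using Xx by (simp add: X_def q'_def qz0)
  also have "\<dots> = x * \<delta> / (\<delta>^2 + y^2)"
    by (simp add: Re_divide)
  also have "\<dots> \<le> varsigma n p \<delta>"
    using final_ineq[OF n1 d0 dp, of x y] xle by (simp add: d_def)
  finally have le: "Re (z0 * deriv q z0 / q z0) \<le> varsigma n p \<delta>" .
  have "z0 \<in> ball 0 1 - {0}" using z0b \<open>z0 \<noteq> 0\<close> by blast
  then have "Re (z0 * deriv q z0 / q z0) > varsigma n p \<delta>" using hyp by blast
  with le show False by simp
qed



theorem corollary3p12:
  fixes n p :: nat and lam \<delta> :: real and f :: "complex \<Rightarrow> complex" and a :: "nat \<Rightarrow> complex"
  assumes "n \<ge> 1" and "p \<ge> 1"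
    and "0 \<le> lam" and "lam \<le> 1"
    and "f holomorphic_on ball 0 1"
    and "\<forall>k < p + n. a k = 0"
    and "\<forall>z \<in> ball 0 1. summable (\<lambda>k. a k * z ^ k) \<and> f z = z ^ p + (\<Sum>k. a k * z ^ k)"
    and "\<forall>z \<in> ball 0 1 - {0}. Flam lam f z * deriv (Flam lam f) z \<noteq> 0"
    and "0 \<le> \<delta>" and "\<delta> < real p"
    and "\<forall>z \<in> ball 0 1 - {0}.
           Re (- (z * deriv (Flam lam f) z / Flam lam f z) + 1
               + z * deriv (deriv (Flam lam f)) z / deriv (Flam lam f) z) > varsigma n p \<delta>"
  shows "\<forall>z \<in> ball 0 1 - {0}. Re (z * deriv (Flam lam f) z / Flam lam f z) > \<delta>"
proof -
  note n1 = assms(1) and p1 = assms(2) and l0 = assms(3) and l1 = assms(4)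
    and holf = assms(5) and a0 = assms(6) and fser = assms(7) and Fnz = assms(8)
    and d0 = assms(9) and dp = assms(10) and hyp = assms(11)
  define m where "m = p + n"
  obtain p' where p': "p = Suc p'" using p1 by (cases p) auto
  obtain n' where n': "n = Suc n'" using n1 by (cases n) auto
  define g where "g w = (\<Sum>k. a (k+m) * w^k)" for w
  have gsum: "(\<lambda>k. a (k+m) * w^k) sums g w" if w: "w \<in> ball 0 1" for w
  proof (cases "w = 0")
    case True
    have "summable (\<lambda>k. a (k+m) * w^k)"
      using sums_summable[OF powser_sums_zero[of "\<lambda>k. a (k+m)"]] True by simp
    then show ?thesis unfolding g_def by (rule summable_sums)
  next
    case False
    have "summable (\<lambda>k. a k * w^k)" using fser w by blast
    from summable_ignore_initial_segment[OF this, of m]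
    have "summable (\<lambda>k. a (k+m) * w^(k+m) / w^m)" by (rule summable_divide)
    moreover have "(\<lambda>k. a (k+m) * w^(k+m) / w^m) = (\<lambda>k. a (k+m) * w^k)"
      using False by (simp add: power_add fun_eq_iff)
    ultimately have "summable (\<lambda>k. a (k+m) * w^k)" by simp
    then show ?thesis unfolding g_def by (rule summable_sums)
  qed
  have fg: "f w = w^p + w^m * g w" if w: "w \<in> ball 0 1" for w
  proof -
    have s: "summable (\<lambda>k. a k * w^k)" and fw: "f w = w ^ p + (\<Sum>k. a k * w ^ k)" using fser w by blast+
    have "(\<Sum>k. a k * w ^ k) = (\<Sum>k. a (k+m) * w^(k+m)) + (\<Sum>i<m. a i * w^i)"
      by (rule suminf_split_initial_segment[OF s])
    also have "(\<Sum>i<m. a i * w^i) = 0" using a0 by (simp add: m_def)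
    also have "(\<Sum>k. a (k+m) * w^(k+m)) = (\<Sum>k. w^m * (a (k+m) * w^k))"
      by (simp add: power_add mult_ac)
    also have "\<dots> = w^m * g w"
      using suminf_mult[OF sums_summable[OF gsum[OF w]], of "w^m"] sums_unique[OF gsum[OF w]] by simp
    finally show ?thesis using fw by simp
  qed
  have holg: "g holomorphic_on ball 0 1"
    by (rule power_series_holomorphic[of 0 1 "\<lambda>k. a (k+m)"]) (use gsum in simp)
  have holg': "deriv g holomorphic_on ball 0 1" by (rule holomorphic_deriv[OF holg open_ball])
  define f1 where "f1 w = of_nat p * w^(p-1) + (of_nat m * w^(m-1) * g w + w^m * deriv g w)" for w
  have derf: "deriv f w = f1 w" if w: "w \<in> ball 0 1" for w
  proof -
    have Dg: "(g has_field_derivative deriv g w) (at w)" by (rule holomorphic_derivI[OF holg open_ball w])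
    have "((\<lambda>w. w^p + w^m * g w) has_field_derivative f1 w) (at w)"
      unfolding f1_def by (auto intro!: derivative_eq_intros Dg)
    then have "(f has_field_derivative f1 w) (at w)"
      by (rule has_field_derivative_transform_within_open[OF _ open_ball w]) (simp add: fg)
    then show ?thesis by (rule DERIV_imp_deriv)
  qed
  define c :: complex where "c = of_real (1 - lam + lam * real p)"
  define G where "G w = of_real (1 - lam + lam * real m) * g w + of_real lam * w * deriv g w" for w
  define \<Phi> where "\<Phi> w = c + w^n * G w" for w
  have FPhi: "Flam lam f w = w^p * \<Phi> w" if w: "w \<in> ball 0 1" for w
  proof -
    have "Flam lam f w = (1 - of_real lam) * (w^p + w^m * g w) + of_real lam * w * f1 w"
      by (simp add: Flam_def fg[OF w] derf[OF w])
    also have "\<dots> = w^p * \<Phi> w"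
      unfolding f1_def \<Phi>_def G_def c_def m_def p' n'
      by (simp add: algebra_simps power_add)
    finally show ?thesis .
  qed
  have holG: "G holomorphic_on ball 0 1" unfolding G_def[abs_def]
    by (intro holomorphic_intros holg holg')
  have holG': "deriv G holomorphic_on ball 0 1" by (rule holomorphic_deriv[OF holG open_ball])
  have holPhi: "\<Phi> holomorphic_on ball 0 1" unfolding \<Phi>_def[abs_def]
    by (intro holomorphic_intros holG)
  have holPhi': "deriv \<Phi> holomorphic_on ball 0 1" by (rule holomorphic_deriv[OF holPhi open_ball])
  have derPhi: "deriv \<Phi> w = of_nat n * w^(n-1) * G w + w^n * deriv G w" if w: "w \<in> ball 0 1" for w
  proof -
    have DG: "(G has_field_derivative deriv G w) (at w)" by (rule holomorphic_derivI[OF holG open_ball w])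
    have "(\<Phi> has_field_derivative of_nat n * w^(n-1) * G w + w^n * deriv G w) (at w)"
      unfolding \<Phi>_def[abs_def] by (auto intro!: derivative_eq_intros DG)
    then show ?thesis by (rule DERIV_imp_deriv)
  qed
  have c1: "1 \<le> 1 - lam + lam * real p"
  proof -
    have "0 \<le> lam * (real p - 1)" using l0 p1 by simp
    then show ?thesis by (simp add: algebra_simps)
  qed
  have Phinz: "\<Phi> w \<noteq> 0" if w: "w \<in> ball 0 1" for w
  proof (cases "w = 0")
    case True
    have "c \<noteq> 0" unfolding c_def of_real_eq_0_iff using c1 by linarith
    moreover have "\<Phi> 0 = c" by (simp add: \<Phi>_def n')
    ultimately show ?thesis using True by simp
  next
    case False
    then have "Flam lam f w \<noteq> 0" using Fnz w by auto
    then show ?thesis using FPhi[OF w] by auto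
  qed
  define q where "q w = of_nat p + w * deriv \<Phi> w / \<Phi> w" for w
  define R where "R w = (of_nat n * G w + w * deriv G w) / \<Phi> w" for w
  have holq: "q holomorphic_on ball 0 1" unfolding q_def[abs_def]
    using Phinz holPhi holPhi' by (auto intro!: holomorphic_intros)
  have holR: "R holomorphic_on ball 0 1" unfolding R_def[abs_def]
    using Phinz holPhi holG holG' by (auto intro!: holomorphic_intros)
  have rep: "\<forall>z\<in>ball 0 1. q z = of_nat p + z^n * R z"
  proof
    fix w :: complex assume w: "w \<in> ball 0 1"
    have "w * deriv \<Phi> w = w^n * (of_nat n * G w + w * deriv G w)"
      unfolding derPhi[OF w] n' by (simp add: algebra_simps)
    then show "q w = of_nat p + w^n * R w" by (simp add: q_def R_def)
  qed
  have holF: "Flam lam f holomorphic_on ball 0 1"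
  proof -
    have "Flam lam f = (\<lambda>z. (1 - of_real lam) * f z + of_real lam * z * deriv f z)"
      by (simp add: Flam_def fun_eq_iff)
    then show ?thesis using holf holomorphic_deriv[OF holf open_ball]
      by (auto intro!: holomorphic_intros)
  qed
  have holF': "deriv (Flam lam f) holomorphic_on ball 0 1" by (rule holomorphic_deriv[OF holF open_ball])
  have derF: "deriv (Flam lam f) w = of_nat p * w^(p-1) * \<Phi> w + w^p * deriv \<Phi> w" if w: "w \<in> ball 0 1" for w
  proof -
    have DP: "(\<Phi> has_field_derivative deriv \<Phi> w) (at w)" by (rule holomorphic_derivI[OF holPhi open_ball w])
    have "((\<lambda>w. w^p * \<Phi> w) has_field_derivative of_nat p * w^(p-1) * \<Phi> w + w^p * deriv \<Phi> w) (at w)"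
      by (auto intro!: derivative_eq_intros DP)
    then have "(Flam lam f has_field_derivative of_nat p * w^(p-1) * \<Phi> w + w^p * deriv \<Phi> w) (at w)"
      by (rule has_field_derivative_transform_within_open[OF _ open_ball w]) (simp add: FPhi)
    then show ?thesis by (rule DERIV_imp_deriv)
  qed
  have qF: "q w = w * deriv (Flam lam f) w / Flam lam f w" if w: "w \<in> ball 0 1 - {0}" for w
  proof -
    have wb: "w \<in> ball 0 1" and w0: "w \<noteq> 0" using w by auto
    have P: "\<Phi> w \<noteq> 0" using Phinz[OF wb] .
    have "w * deriv (Flam lam f) w / Flam lam f w
        = w * (of_nat p * w^p' * \<Phi> w + w * w^p' * deriv \<Phi> w) / (w * w^p' * \<Phi> w)"
      unfolding derF[OF wb] FPhi[OF wb] p' by simp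
    also have "\<dots> = q w" using P w0 by (simp add: q_def field_simps)
    finally show ?thesis by simp
  qed
  have hyp': "\<forall>z\<in>ball 0 1 - {0}. Re (z * deriv q z / q z) > varsigma n p \<delta>"
  proof
    fix z :: complex assume z: "z \<in> ball 0 1 - {0}"
    have zb: "z \<in> ball 0 1" and z0: "z \<noteq> 0" using z by auto
    define F where "F = Flam lam f"
    have F0: "F z \<noteq> 0" and F1: "deriv F z \<noteq> 0" using Fnz z by (auto simp: F_def)
    have DF: "(F has_field_derivative deriv F z) (at z)"
      unfolding F_def by (rule holomorphic_derivI[OF holF open_ball zb])
    have DF': "(deriv F has_field_derivative deriv (deriv F) z) (at z)"
      unfolding F_def by (rule holomorphic_derivI[OF holF' open_ball zb])
    define L where "L = ((deriv F z + z * deriv (deriv F) z) * F z - z * deriv F z * deriv F z) / (F z * F z)"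
    have "((\<lambda>w. w * deriv F w / F w) has_field_derivative L) (at z)"
      unfolding L_def using F0
      by (auto intro!: derivative_eq_intros DF DF' simp: algebra_simps)
    then have "(q has_field_derivative L) (at z)"
      by (rule has_field_derivative_transform_within_open[of _ _ _ "ball 0 1 - {0}"])
         (use z qF in \<open>auto simp: F_def\<close>)
    then have dq: "deriv q z = L" by (rule DERIV_imp_deriv)
    have "z * deriv q z / q z = - (z * deriv F z / F z) + 1 + z * deriv (deriv F) z / deriv F z"
      unfolding dq qF[OF z] L_def F_def[symmetric] using F0 F1 z0
      by (simp add: field_simps)
    then show "Re (z * deriv q z / q z) > varsigma n p \<delta>" using hyp z by (simp add: F_def)
  qed
  have all: "\<forall>z\<in>ball 0 1. Re (q z) > \<delta>"
    by (rule core[OF n1 d0 dp holq holR rep hyp'])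
  show ?thesis
  proof
    fix z :: complex assume z: "z \<in> ball 0 1 - {0}"
    then have "Re (q z) > \<delta>" using all by blast
    then show "Re (z * deriv (Flam lam f) z / Flam lam f z) > \<delta>" using qF[OF z] by simp
  qed
qed

end
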